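(* Equip $V^{5,2}=\mathrm{SO}(5)/\mathrm{SO}(3)$ with the Sasakian structure $\eta=X^1$, $g=y_1Q|_{\mathfrak m_1}+y_2Q|_{\mathfrak m_2}+y_3Q|_{\mathfrak m_3}$ with $y_1=4y_2^2$, $y_2=y_3>0$. Then the $\mathrm{SO}(5)$-invariant connection on the homogeneous bundle $P_1=\mathrm{SO}(5)\times_{\mathrm{id}}\mathrm{SO}(3)$ corresponding to $\alpha=e^8\otimes e_8+e^9\otimes e_9+e^{10}\otimes e_{10}$ is a self-dual contact instanton, i.e. its curvature satisfies $\ast(F_\alpha\wedge\eta\wedge\omega)=F_\alpha$ with $\omega=\frac12d\eta$.
   Context: Basis of $\mathfrak{so}(5)$ (with $E_{ij}$ the elementary $5\times5$ matrices): $e_1=E_{12}-E_{21}$, $e_2=E_{13}-E_{31}$, $e_3=E_{14}-E_{41}$, $e_4=E_{15}-E_{51}$, $e_5=E_{23}-E_{32}$, $e_6=E_{24}-E_{42}$, $e_7=E_{25}-E_{52}$, $e_8=E_{34}-E_{43}$, $e_9=E_{35}-E_{53}$, $e_{10}=E_{54}-E_{45}$; bracket = commutator; $e^i$ dual basis. $\mathrm{SO}(3)$ has Lie algebra $\mathrm{span}\{e_8,e_9,e_{10}\}$; $\mathfrak m=\mathrm{span}\{e_1,\dots,e_7\}$ identified with the tangent space of $V^{5,2}$ at the origin. $Q(A,B)=\frac12\mathrm{tr}(AB^T)$, $\mathfrak m_1=\mathrm{span}\{e_1\}$, $\mathfrak m_2=\mathrm{span}\{e_2,e_3,e_4\}$,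 $\mathfrak m_3=\mathrm{span}\{e_5,e_6,e_7\}$. Orthonormal basis $X_1=e_1/\sqrt{y_1}$, $X_i=e_i/\sqrt{y_2}$ ($i=2,\dots,7$), dual $X^i$; $\omega=X^{25}+X^{36}+X^{47}$. Invariant connections on $G\times_\phi K\to G/H$ correspond to linear maps $\alpha:\mathfrak g\to\mathfrak k$ with $\alpha|_{\mathfrak h}=\phi_*$ and $\mathrm{Ad}(H)$-equivariance; the curvature on $\mathfrak m$ is $F(X,Y)=[\alpha X,\alpha Y]-\alpha([X,Y])$. $\ast$ is the Hodge star of $g$ with the orientation for which the self-dual contact 2-forms $X^{23}+X^{56}$, $X^{24}+X^{57}$, $X^{34}+X^{67}$, etc. satisfy $\ast(\eta\wedge\omega\wedge w)=w$. *)

theory Defs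
  imports "HOL-Analysis.Analysis"
begin

type_synonym mat5 = "nat \<Rightarrow> nat \<Rightarrow> real"

definition Emat :: "nat \<Rightarrow> nat \<Rightarrow> mat5" where
  "Emat i j = (\<lambda>a b. if a = i \<and> b = j then 1 else 0)"

definition madd :: "mat5 \<Rightarrow> mat5 \<Rightarrow> mat5" where
  "madd A B = (\<lambda>a b. A a b + B a b)"

definition msub :: "mat5 \<Rightarrow> mat5 \<Rightarrow> mat5" where
  "msub A B = (\<lambda>a b. A a b - B a b)"

definition mscale :: "real \<Rightarrow> mat5 \<Rightarrow> mat5" where
  "mscale c A = (\<lambda>a b. c * A a b)"

definition mmult :: "mat5 \<Rightarrow> mat5 \<Rightarrow> mat5" where
  "mmult A B = (\<lambda>a c. \<Sum>b\<in>{1..5}. A a b * B b c)"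

definition brk :: "mat5 \<Rightarrow> mat5 \<Rightarrow> mat5" where
  "brk A B = msub (mmult A B) (mmult B A)"

definition ebasis :: "nat \<Rightarrow> mat5" where
  "ebasis k =
    (if k = 1 then msub (Emat 1 2) (Emat 2 1)
     else if k = 2 then msub (Emat 1 3) (Emat 3 1)
     else if k = 3 then msub (Emat 1 4) (Emat 4 1)
     else if k = 4 then msub (Emat 1 5) (Emat 5 1)
     else if k = 5 then msub (Emat 2 3) (Emat 3 2)
     else if k = 6 then msub (Emat 2 4) (Emat 4 2)
     else if k = 7 then msub (Emat 2 5) (Emat 5 2)
     else if k = 8 then msub (Emat 3 4) (Emat 4 3)
     else if k = 9 then msub (Emat 3 5) (Emat 5 3)
     else if k = 10 then msub (Emat 5 4) (Emat 4 5)
     else (\<lambda>a b. 0))"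

definition Qform :: "mat5 \<Rightarrow> mat5 \<Rightarrow> real" where
  "Qform A B = (1/2) * (\<Sum>a\<in>{1..5}. \<Sum>b\<in>{1..5}. A a b * B a b)"

text \<open>Dual basis e^i. The e_i are Q-orthonormal, so e^i(A) = Q(A, e_i) for A in so(5).\<close>
definition edual :: "nat \<Rightarrow> mat5 \<Rightarrow> real" where
  "edual i A = Qform A (ebasis i)"

definition alpha :: "mat5 \<Rightarrow> mat5" where
  "alpha A = madd (mscale (edual 8 A) (ebasis 8))
               (madd (mscale (edual 9 A) (ebasis 9)) (mscale (edual 10 A) (ebasis 10)))"

definition curv :: "mat5 \<Rightarrow> mat5 \<Rightarrow> mat5" where
  "curv X Y = msub (brk (alpha X) (alpha Y)) (alpha (brk X Y))"

text \<open>Metric parameter attached to e_i: y1 on m1, y2 on m2, y3 on m3.\<close>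
definition yval :: "real \<Rightarrow> real \<Rightarrow> real \<Rightarrow> nat \<Rightarrow> real" where
  "yval y1 y2 y3 i = (if i = 1 then y1 else if i \<in> {2,3,4} then y2 else y3)"

definition Xb :: "real \<Rightarrow> real \<Rightarrow> real \<Rightarrow> nat \<Rightarrow> mat5" where
  "Xb y1 y2 y3 i = mscale (1 / sqrt (yval y1 y2 y3 i)) (ebasis i)"

text \<open>A (real) form is given by its coefficients on the basis forms X^I,
  I an (increasingly ordered) subset of {1..7}.\<close>
type_synonym form = "nat set \<Rightarrow> real"

definition sgnp :: "nat set \<Rightarrow> nat set \<Rightarrow> real" where
  "sgnp I J = (-1) ^ card {(i, j). i \<in> I \<and> j \<in> J \<and> j < i}"

text \<open>Wedge product (forms are homogeneous, so summing over all I works):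
  X^I \<and> X^J = sgnp I J X^(I \<union> J) for disjoint I,J.\<close>
definition wedge :: "form \<Rightarrow> form \<Rightarrow> form" where
  "wedge \<phi> \<psi> = (\<lambda>K. \<Sum>I\<in>Pow K. sgnp I (K - I) * \<phi> I * \<psi> (K - I))"

text \<open>2-form with values B(X_i,X_j) on the frame.\<close>
definition form2 :: "(nat \<Rightarrow> nat \<Rightarrow> real) \<Rightarrow> form" where
  "form2 B = (\<lambda>I. if card I = 2 \<and> I \<subseteq> {1..7} then B (Min I) (Max I) else 0)"

text \<open>Hodge star of g (orthonormal frame X_i) with volume form X^1234567:
  * X^I = sgnp I I^c X^(I^c).\<close>
definition hodge :: "form \<Rightarrow> form" where
  "hodge \<phi> = (\<lambda>J. if J \<subseteq> {1..7} then sgnp ({1..7} - J) J * \<phi> ({1..7} - J) else 0)"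

definition eta :: form where
  "eta = (\<lambda>I. if I = {1} then 1 else 0)"

text \<open>eta as a linear functional on so(5) (m-component X^1, zero on the isotropy algebra).\<close>
definition eta_fun :: "real \<Rightarrow> mat5 \<Rightarrow> real" where
  "eta_fun y1 A = sqrt y1 * edual 1 A"

text \<open>omega = 1/2 d eta, with d eta(X,Y) = - eta([X,Y]) for invariant forms, X,Y in m.\<close>
definition omega :: "real \<Rightarrow> real \<Rightarrow> real \<Rightarrow> form" where
  "omega y1 y2 y3 = form2 (\<lambda>i j. - (1/2) * eta_fun y1 (brk (Xb y1 y2 y3 i) (Xb y1 y2 y3 j)))"

definition Fcomp :: "real \<Rightarrow> real \<Rightarrow> real \<Rightarrow> nat \<Rightarrow> form" where
  "Fcomp y1 y2 y3 c = form2 (\<lambda>i j. edual c (curv (Xb y1 y2 y3 i) (Xb y1 y2 y3 j)))"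

end

theory Submission imports Defs begin

lemma sgnp_sum: "finite I \<Longrightarrow> finite J \<Longrightarrow>
  sgnp I J = (-1) ^ (\<Sum>i\<in>I. \<Sum>j\<in>J. if j < i then 1 else 0)"
proof -
  assume f: "finite I" "finite J"
  have "{(i, j). i \<in> I \<and> j \<in> J \<and> j < i} = Sigma I (\<lambda>i. {j\<in>J. j < i})" by auto
  hence "card {(i, j). i \<in> I \<and> j \<in> J \<and> j < i} = (\<Sum>i\<in>I. card {j\<in>J. j < i})"
    using f by (simp add: card_SigmaI)
  also have "\<dots> = (\<Sum>i\<in>I. \<Sum>j\<in>J. if j < i then 1 else 0)"
    using f by (simp add: sum.inter_filter[symmetric])
  finally show ?thesis unfolding sgnp_def by simp
qed

lemma wedge_supp:
  assumes "finite K" "finite S" "\<And>P. \<psi> P \<noteq> 0 \<Longrightarrow> P \<in> S"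
  shows "wedge \<phi> \<psi> K = (\<Sum>P\<in>S. if P \<subseteq> K then sgnp (K - P) P * \<phi> (K - P) * \<psi> P else 0)"
proof -
  have "wedge \<phi> \<psi> K = (\<Sum>P\<in>Pow K. sgnp (K - P) P * \<phi> (K - P) * \<psi> P)"
    unfolding wedge_def
    by (rule sum.reindex_bij_witness[where i="\<lambda>I. K - I" and j="\<lambda>I. K - I"]) (auto simp: Diff_Diff_Int Int_absorb1)
  also have "\<dots> = (\<Sum>P\<in>Pow K \<inter> S. sgnp (K - P) P * \<phi> (K - P) * \<psi> P)"
    by (rule sum.mono_neutral_right) (use assms in auto)
  also have "\<dots> = (\<Sum>P\<in>S. if P \<subseteq> K then sgnp (K - P) P * \<phi> (K - P) * \<psi> P else 0)"
    by (simp add: Int_commute sum.inter_restrict[OF assms(2)])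
  finally show ?thesis .
qed

definition Om :: form where
  "Om = form2 (\<lambda>i j. if (i=2\<and>j=5) \<or> (i=3\<and>j=6) \<or> (i=4\<and>j=7) then 1 else 0)"

lemma card2_minmax:
  fixes I :: "nat set" assumes "card I = 2" shows "I = {Min I, Max I}" "Min I < Max I"
proof -
  have "\<exists>a b. I = {a,b} \<and> a \<noteq> b" using assms by (simp add: card_2_iff)
  then obtain a b where ab: "I = {a,b}" "a \<noteq> b" by blast
  have "a < b \<or> b < a" using ab(2) by arith
  then have "Min I = min a b \<and> Max I = max a b" unfolding ab(1) by auto
  then show "I = {Min I, Max I}" "Min I < Max I" using ab by (auto simp: min_def max_def)
qed

lemma Om_supp: "Om P \<noteq> 0 \<Longrightarrow> P \<in> {{2,5},{3,6},{4,7}}"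
proof -
  assume a: "Om P \<noteq> 0"
  hence c: "card P = 2" and m: "(Min P=2\<and>Max P=5) \<or> (Min P=3\<and>Max P=6) \<or> (Min P=4\<and>Max P=7)"
    unfolding Om_def form2_def by (auto split: if_splits)
  define a where "a = Min P"
  define b where "b = Max P"
  have "P = {a, b}" using card2_minmax(1)[OF c] unfolding a_def b_def .
  moreover have "(a=2\<and>b=5) \<or> (a=3\<and>b=6) \<or> (a=4\<and>b=7)" using m unfolding a_def b_def .
  ultimately show ?thesis by auto
qed

lemma eta_supp: "eta P \<noteq> 0 \<Longrightarrow> P \<in> {{1}}"
  unfolding eta_def by (auto split: if_splits)

lemma wedge_Om: "finite K \<Longrightarrow> wedge \<phi> Om K = (\<Sum>P\<in>{{2,5},{3,6},{4,7}}. if P \<subseteq> K then sgnp (K - P) P * \<phi> (K - P) * Om P else 0)"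
  by (rule wedge_supp) (auto dest: Om_supp)

lemma wedge_eta: "finite K \<Longrightarrow> wedge \<phi> eta K = (if {1} \<subseteq> K then sgnp (K - {1}) {1} * \<phi> (K - {1}) else 0)"
proof -
  assume f: "finite K"
  have "wedge \<phi> eta K = (\<Sum>P\<in>{{1}}. if P \<subseteq> K then sgnp (K - P) P * \<phi> (K - P) * eta P else 0)"
    by (rule wedge_supp) (use f eta_supp in auto)
  thus ?thesis by (simp add: eta_def)
qed

lemma Om_val: "Om P = (if P = {2,5} \<or> P = {3,6} \<or> P = {4,7} then 1 else 0)"
proof (cases "P = {2,5} \<or> P = {3,6} \<or> P = {4,7}")
  case True thus ?thesis unfolding Om_def form2_def by auto
next
  case False
  have "Om P = 0" using Om_supp[of P] False by blast
  thus ?thesis using False by simp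
qed

lemma U7: "{1..7::nat} = {1,2,3,4,5,6,7}" by auto
lemma U7': "{Suc 0..7} = {Suc 0,2,3,4,5,6,7}" by auto


lemma T_formula: assumes "finite K" shows "wedge (wedge \<phi> eta) Om K =
  (\<Sum>P\<in>{{2,5},{3,6},{4,7}}. if P \<subseteq> K \<and> 1 \<in> K - P then sgnp (K - P) P * sgnp (K - P - {1}) {1} * \<phi> (K - P - {1}) * Om P else 0)"
proof -
  have "wedge (wedge \<phi> eta) Om K = (\<Sum>P\<in>{{2,5},{3,6},{4,7}}. if P \<subseteq> K then sgnp (K - P) P * wedge \<phi> eta (K - P) * Om P else 0)"
    by (rule wedge_Om[OF assms])
  also have "\<dots> = (\<Sum>P\<in>{{2,5},{3,6},{4,7}}. if P \<subseteq> K \<and> 1 \<in> K - P then sgnp (K - P) P * sgnp (K - P - {1}) {1} * \<phi> (K - P - {1}) * Om P else 0)"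
    by (rule sum.cong[OF refl]) (use assms in \<open>simp add: wedge_eta\<close>)
  finally show ?thesis .
qed

lemma vanish:
  assumes "J \<subseteq> {1..7::nat}" "P \<subseteq> {1..7} - J" "1 \<in> {1..7} - J - P" "{1..7} - J - P - {1} = Q"
  shows "J = {1..7} - insert 1 (P \<union> Q) \<and> P \<inter> Q = {}"
  using assms by auto

definition F8 :: "real \<Rightarrow> form" where
  "F8 k = form2 (\<lambda>i j. if (i=2\<and>j=3) \<or> (i=5\<and>j=6) then k else 0)"

lemma F8_val: "F8 k P = (if P = {2,3} \<or> P = {5,6} then k else 0)"
proof (cases "P = {2,3} \<or> P = {5,6}")
  case True thus ?thesis unfolding F8_def form2_def by auto
next
  case False
  show ?thesis
  proof (cases "card P = 2")
    case True
    define a where "a = Min P"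
    define b where "b = Max P"
    have "P = {a, b}" using card2_minmax(1)[OF True] unfolding a_def b_def .
    thus ?thesis using False unfolding F8_def form2_def a_def[symmetric] b_def[symmetric] by auto
  next
    case c: False
    thus ?thesis using False unfolding F8_def form2_def by auto
  qed
qed

lemma zero8:
  assumes J: "J \<subseteq> {1..7}" "J \<noteq> {2,3}" "J \<noteq> {5,6}"
  shows "wedge (wedge (F8 k) eta) Om ({1..7} - J) = 0"
  unfolding T_formula[OF finite_Diff[OF finite_atLeastAtMost]]
proof (rule sum.neutral, rule ballI)
  fix P assume P: "P \<in> {{2,5},{3,6},{4,7::nat}}"
  show "(if P \<subseteq> {1..7} - J \<and> 1 \<in> {1..7} - J - P then sgnp ({1..7} - J - P) P * sgnp ({1..7} - J - P - {1}) {1} * F8 k ({1..7} - J - P - {1}) * Om P else 0) = 0"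
  proof (cases "P \<subseteq> {1..7} - J \<and> 1 \<in> {1..7} - J - P \<and> ({1..7} - J - P - {1} = {2,3} \<or> {1..7} - J - P - {1} = {5,6})")
    case True
    then obtain Q where Q: "Q \<in> {{2,3},{5,6}}" "{1..7} - J - P - {1} = Q" by auto
    have JJ: "J = {1..7} - insert 1 (P \<union> Q) \<and> P \<inter> Q = {}" using vanish[OF J(1) conjunct1[OF True] conjunct1[OF conjunct2[OF True]] Q(2)] .
    from P have "P = {2,5} \<or> P = {3,6} \<or> P = {4,7}" by simp
    moreover from Q(1) have "Q = {2,3} \<or> Q = {5,6}" by simp
    ultimately show ?thesis using JJ J(2,3) by (elim disjE; simp add: U7 U7' insert_Diff_if)
  next
    case False thus ?thesis by (auto simp: F8_val)
  qed
qed

lemma one8a: "hodge (wedge (wedge (F8 k) eta) Om) {5,6} = F8 k {5,6}"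
  unfolding hodge_def U7
  apply (simp only: wedge_Om wedge_eta finite_Diff finite_insert finite.emptyI)
  apply (simp add: sgnp_sum F8_val Om_val set_eq_subset insert_Diff_if)
  done

lemma one8b: "hodge (wedge (wedge (F8 k) eta) Om) {2,3} = F8 k {2,3}"
  unfolding hodge_def U7
  apply (simp only: wedge_Om wedge_eta finite_Diff finite_insert finite.emptyI)
  apply (simp add: sgnp_sum F8_val Om_val set_eq_subset insert_Diff_if)
  done

lemma main8: "hodge (wedge (wedge (F8 k) eta) Om) = F8 k"
proof
  fix J show "hodge (wedge (wedge (F8 k) eta) Om) J = F8 k J"
  proof (cases "J \<subseteq> {1..7}")
    case True
    show ?thesis
    proof (cases "J = {2,3} \<or> J = {5,6}")
      case True thus ?thesis using one8a one8b by auto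
    next
      case False
      hence "F8 k J = 0" unfolding F8_val by auto
      thus ?thesis using zero8[of J k] False True unfolding hodge_def by simp
    qed
  next
    case False
    hence "F8 k J = 0" unfolding F8_val by auto
    thus ?thesis using False unfolding hodge_def by simp
  qed
qed

definition F9 :: "real \<Rightarrow> form" where
  "F9 k = form2 (\<lambda>i j. if (i=2\<and>j=4) \<or> (i=5\<and>j=7) then k else 0)"

lemma F9_val: "F9 k P = (if P = {2,4} \<or> P = {5,7} then k else 0)"
proof (cases "P = {2,4} \<or> P = {5,7}")
  case True thus ?thesis unfolding F9_def form2_def by auto
next
  case False
  show ?thesis
  proof (cases "card P = 2")
    case True
    define a where "a = Min P"
    define b where "b = Max P"
    have "P = {a, b}" using card2_minmax(1)[OF True] unfolding a_def b_def .
    thus ?thesis using False unfolding F9_def form2_def a_def[symmetric] b_def[symmetric] by auto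
  next
    case c: False
    thus ?thesis using False unfolding F9_def form2_def by auto
  qed
qed

lemma zero9:
  assumes J: "J \<subseteq> {1..7}" "J \<noteq> {2,4}" "J \<noteq> {5,7}"
  shows "wedge (wedge (F9 k) eta) Om ({1..7} - J) = 0"
  unfolding T_formula[OF finite_Diff[OF finite_atLeastAtMost]]
proof (rule sum.neutral, rule ballI)
  fix P assume P: "P \<in> {{2,5},{3,6},{4,7::nat}}"
  show "(if P \<subseteq> {1..7} - J \<and> 1 \<in> {1..7} - J - P then sgnp ({1..7} - J - P) P * sgnp ({1..7} - J - P - {1}) {1} * F9 k ({1..7} - J - P - {1}) * Om P else 0) = 0"
  proof (cases "P \<subseteq> {1..7} - J \<and> 1 \<in> {1..7} - J - P \<and> ({1..7} - J - P - {1} = {2,4} \<or> {1..7} - J - P - {1} = {5,7})")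
    case True
    then obtain Q where Q: "Q \<in> {{2,4},{5,7}}" "{1..7} - J - P - {1} = Q" by auto
    have JJ: "J = {1..7} - insert 1 (P \<union> Q) \<and> P \<inter> Q = {}" using vanish[OF J(1) conjunct1[OF True] conjunct1[OF conjunct2[OF True]] Q(2)] .
    from P have "P = {2,5} \<or> P = {3,6} \<or> P = {4,7}" by simp
    moreover from Q(1) have "Q = {2,4} \<or> Q = {5,7}" by simp
    ultimately show ?thesis using JJ J(2,3) by (elim disjE; simp add: U7 U7' insert_Diff_if)
  next
    case False thus ?thesis by (auto simp: F9_val)
  qed
qed

lemma one9a: "hodge (wedge (wedge (F9 k) eta) Om) {5,7} = F9 k {5,7}"
  unfolding hodge_def U7
  apply (simp only: wedge_Om wedge_eta finite_Diff finite_insert finite.emptyI)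
  apply (simp add: sgnp_sum F9_val Om_val set_eq_subset insert_Diff_if)
  done

lemma one9b: "hodge (wedge (wedge (F9 k) eta) Om) {2,4} = F9 k {2,4}"
  unfolding hodge_def U7
  apply (simp only: wedge_Om wedge_eta finite_Diff finite_insert finite.emptyI)
  apply (simp add: sgnp_sum F9_val Om_val set_eq_subset insert_Diff_if)
  done

lemma main9: "hodge (wedge (wedge (F9 k) eta) Om) = F9 k"
proof
  fix J show "hodge (wedge (wedge (F9 k) eta) Om) J = F9 k J"
  proof (cases "J \<subseteq> {1..7}")
    case True
    show ?thesis
    proof (cases "J = {2,4} \<or> J = {5,7}")
      case True thus ?thesis using one9a one9b by auto
    next
      case False
      hence "F9 k J = 0" unfolding F9_val by auto
      thus ?thesis using zero9[of J k] False True unfolding hodge_def by simp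
    qed
  next
    case False
    hence "F9 k J = 0" unfolding F9_val by auto
    thus ?thesis using False unfolding hodge_def by simp
  qed
qed

definition F10 :: "real \<Rightarrow> form" where
  "F10 k = form2 (\<lambda>i j. if (i=3\<and>j=4) \<or> (i=6\<and>j=7) then k else 0)"

lemma F10_val: "F10 k P = (if P = {3,4} \<or> P = {6,7} then k else 0)"
proof (cases "P = {3,4} \<or> P = {6,7}")
  case True thus ?thesis unfolding F10_def form2_def by auto
next
  case False
  show ?thesis
  proof (cases "card P = 2")
    case True
    define a where "a = Min P"
    define b where "b = Max P"
    have "P = {a, b}" using card2_minmax(1)[OF True] unfolding a_def b_def .
    thus ?thesis using False unfolding F10_def form2_def a_def[symmetric] b_def[symmetric] by auto
  next
    case c: False
    thus ?thesis using False unfolding F10_def form2_def by auto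
  qed
qed

lemma zero10:
  assumes J: "J \<subseteq> {1..7}" "J \<noteq> {3,4}" "J \<noteq> {6,7}"
  shows "wedge (wedge (F10 k) eta) Om ({1..7} - J) = 0"
  unfolding T_formula[OF finite_Diff[OF finite_atLeastAtMost]]
proof (rule sum.neutral, rule ballI)
  fix P assume P: "P \<in> {{2,5},{3,6},{4,7::nat}}"
  show "(if P \<subseteq> {1..7} - J \<and> 1 \<in> {1..7} - J - P then sgnp ({1..7} - J - P) P * sgnp ({1..7} - J - P - {1}) {1} * F10 k ({1..7} - J - P - {1}) * Om P else 0) = 0"
  proof (cases "P \<subseteq> {1..7} - J \<and> 1 \<in> {1..7} - J - P \<and> ({1..7} - J - P - {1} = {3,4} \<or> {1..7} - J - P - {1} = {6,7})")
    case True
    then obtain Q where Q: "Q \<in> {{3,4},{6,7}}" "{1..7} - J - P - {1} = Q" by auto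
    have JJ: "J = {1..7} - insert 1 (P \<union> Q) \<and> P \<inter> Q = {}" using vanish[OF J(1) conjunct1[OF True] conjunct1[OF conjunct2[OF True]] Q(2)] .
    from P have "P = {2,5} \<or> P = {3,6} \<or> P = {4,7}" by simp
    moreover from Q(1) have "Q = {3,4} \<or> Q = {6,7}" by simp
    ultimately show ?thesis using JJ J(2,3) by (elim disjE; simp add: U7 U7' insert_Diff_if)
  next
    case False thus ?thesis by (auto simp: F10_val)
  qed
qed

lemma one10a: "hodge (wedge (wedge (F10 k) eta) Om) {6,7} = F10 k {6,7}"
  unfolding hodge_def U7
  apply (simp only: wedge_Om wedge_eta finite_Diff finite_insert finite.emptyI)
  apply (simp add: sgnp_sum F10_val Om_val set_eq_subset insert_Diff_if)
  done

lemma one10b: "hodge (wedge (wedge (F10 k) eta) Om) {3,4} = F10 k {3,4}"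
  unfolding hodge_def U7
  apply (simp only: wedge_Om wedge_eta finite_Diff finite_insert finite.emptyI)
  apply (simp add: sgnp_sum F10_val Om_val set_eq_subset insert_Diff_if)
  done

lemma main10: "hodge (wedge (wedge (F10 k) eta) Om) = F10 k"
proof
  fix J show "hodge (wedge (wedge (F10 k) eta) Om) J = F10 k J"
  proof (cases "J \<subseteq> {1..7}")
    case True
    show ?thesis
    proof (cases "J = {3,4} \<or> J = {6,7}")
      case True thus ?thesis using one10a one10b by auto
    next
      case False
      hence "F10 k J = 0" unfolding F10_val by auto
      thus ?thesis using zero10[of J k] False True unfolding hodge_def by simp
    qed
  next
    case False
    hence "F10 k J = 0" unfolding F10_val by auto
    thus ?thesis using False unfolding hodge_def by simp
  qed
qed

lemma U5a: "{1..5::nat} = {1,2,3,4,5}" by auto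
lemma U5b: "{Suc 0..5} = {Suc 0,2,3,4,5}" by auto
lemmas sum5 = U5a U5b

lemma Qform_msub: "Qform (msub A B) C = Qform A C - Qform B C"
  unfolding Qform_def msub_def by (simp add: algebra_simps sum_subtractf)

lemma Qform_madd: "Qform (madd A B) C = Qform A C + Qform B C"
  unfolding Qform_def madd_def by (simp add: algebra_simps sum.distrib)

lemma Qform_mscale: "Qform (mscale s A) C = s * Qform A C"
  unfolding Qform_def mscale_def by (simp add: algebra_simps sum_distrib_left)

lemma brk_mscale: "brk (mscale a A) (mscale b B) = mscale (a*b) (brk A B)"
  unfolding brk_def mscale_def msub_def mmult_def
  by (rule ext, rule ext) (simp add: sum_distrib_left algebra_simps)

lemma brk_zero: "brk (\<lambda>a b. 0) (\<lambda>a b. 0) = (\<lambda>a b. 0)"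
  unfolding brk_def msub_def mmult_def by simp

lemma Qe: "\<forall>c\<in>{8,9,10::nat}. \<forall>d\<in>{8,9,10::nat}. Qform (ebasis d) (ebasis c) = (if c = d then 1 else 0)"
  by (simp add: Qform_def sum5 ebasis_def msub_def Emat_def)

lemma edual_m: "\<forall>c\<in>{8,9,10::nat}. \<forall>i\<in>{1,2,3,4,5,6,7::nat}. edual c (ebasis i) = 0"
  by (simp add: edual_def Qform_def sum5 ebasis_def msub_def Emat_def)

lemma tab1: "\<forall>i\<in>{1,2,3,4,5,6,7::nat}. \<forall>j\<in>{1,2,3,4,5,6,7::nat}. i < j \<longrightarrow>
   edual 1 (brk (ebasis i) (ebasis j)) = (if (i=2\<and>j=5) \<or> (i=3\<and>j=6) \<or> (i=4\<and>j=7) then -1 else 0)"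
  by (simp add: edual_def Qform_def sum5 ebasis_def msub_def Emat_def brk_def mmult_def)

lemma tab8: "\<forall>i\<in>{1,2,3,4,5,6,7::nat}. \<forall>j\<in>{1,2,3,4,5,6,7::nat}. i < j \<longrightarrow>
   edual 8 (brk (ebasis i) (ebasis j)) = (if (i=2\<and>j=3) \<or> (i=5\<and>j=6) then -1 else 0)"
  by (simp add: edual_def Qform_def sum5 ebasis_def msub_def Emat_def brk_def mmult_def)

lemma tab9: "\<forall>i\<in>{1,2,3,4,5,6,7::nat}. \<forall>j\<in>{1,2,3,4,5,6,7::nat}. i < j \<longrightarrow>
   edual 9 (brk (ebasis i) (ebasis j)) = (if (i=2\<and>j=4) \<or> (i=5\<and>j=7) then -1 else 0)"
  by (simp add: edual_def Qform_def sum5 ebasis_def msub_def Emat_def brk_def mmult_def)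

lemma tab10: "\<forall>i\<in>{1,2,3,4,5,6,7::nat}. \<forall>j\<in>{1,2,3,4,5,6,7::nat}. i < j \<longrightarrow>
   edual 10 (brk (ebasis i) (ebasis j)) = (if (i=3\<and>j=4) \<or> (i=6\<and>j=7) then 1 else 0)"
  by (simp add: edual_def Qform_def sum5 ebasis_def msub_def Emat_def brk_def mmult_def)

lemma alpha_Xb: assumes "i \<in> {1,2,3,4,5,6,7::nat}" shows "alpha (Xb y1 y2 y3 i) = (\<lambda>a b. 0)"
proof -
  have "edual c (Xb y1 y2 y3 i) = 0" if "c \<in> {8,9,10}" for c
    using edual_m[rule_format, OF that assms] unfolding Xb_def edual_def by (simp add: Qform_mscale)
  thus ?thesis unfolding alpha_def by (simp add: madd_def mscale_def)
qed

lemma edual_alpha: assumes "c \<in> {8,9,10::nat}" shows "edual c (alpha A) = edual c A"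
  using assms unfolding alpha_def edual_def
  by (auto simp: Qform_madd Qform_mscale Qe[rule_format])

lemma edual_curv:
  assumes "c \<in> {8,9,10::nat}" "i \<in> {1,2,3,4,5,6,7::nat}" "j \<in> {1,2,3,4,5,6,7::nat}"
  shows "edual c (curv (Xb y1 y2 y3 i) (Xb y1 y2 y3 j)) =
    - ((1 / sqrt (yval y1 y2 y3 i)) * (1 / sqrt (yval y1 y2 y3 j))) * edual c (brk (ebasis i) (ebasis j))"
proof -
  have "edual c (curv (Xb y1 y2 y3 i) (Xb y1 y2 y3 j)) = - edual c (alpha (brk (Xb y1 y2 y3 i) (Xb y1 y2 y3 j)))"
    unfolding curv_def alpha_Xb[OF assms(2)] alpha_Xb[OF assms(3)] brk_zero
    by (simp add: edual_def Qform_def msub_def sum_negf)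
  also have "\<dots> = - edual c (brk (Xb y1 y2 y3 i) (Xb y1 y2 y3 j))" using edual_alpha[OF assms(1)] by simp
  also have "\<dots> = - ((1 / sqrt (yval y1 y2 y3 i)) * (1 / sqrt (yval y1 y2 y3 j))) * edual c (brk (ebasis i) (ebasis j))"
    unfolding Xb_def brk_mscale edual_def Qform_mscale by simp
  finally show ?thesis .
qed

lemma sq: "0 < (y::real) \<Longrightarrow> 1 / sqrt y * (1 / sqrt y) = 1 / y"
  by (simp add: divide_simps)

lemma form2_cong:
  assumes "\<And>i j. i \<in> {1,2,3,4,5,6,7} \<Longrightarrow> j \<in> {1,2,3,4,5,6,7} \<Longrightarrow> i < j \<Longrightarrow> B i j = B' i j"
  shows "form2 B = form2 B'"
proof
  fix I :: "nat set"
  show "form2 B I = form2 B' I"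
  proof (cases "card I = 2 \<and> I \<subseteq> {1..7}")
    case True
    hence f: "finite I" "I \<noteq> {}" using card_gt_0_iff by fastforce+
    have "Min I \<in> I" "Max I \<in> I" using Min_in Max_in f by auto
    hence "Min I \<in> {1,2,3,4,5,6,7}" "Max I \<in> {1,2,3,4,5,6,7}" using True U7 by auto
    moreover have "Min I < Max I" using card2_minmax(2) True by blast
    ultimately have "B (Min I) (Max I) = B' (Min I) (Max I)" by (rule assms)
    thus ?thesis unfolding form2_def using True by simp
  next
    case False thus ?thesis unfolding form2_def by (simp only: False if_False)
  qed
qed

lemma Fcomp8: assumes "y2 > 0" "y3 = y2" shows "Fcomp y1 y2 y3 8 = F8 (1/y2)"
  unfolding Fcomp_def F8_def
proof (rule form2_cong)
  fix i j :: nat assume ij: "i \<in> {1,2,3,4,5,6,7}" "j \<in> {1,2,3,4,5,6,7}" "i < j"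
  show "edual 8 (curv (Xb y1 y2 y3 i) (Xb y1 y2 y3 j)) = (if (i=2\<and>j=3) \<or> (i=5\<and>j=6) then 1/y2 else 0)"
    unfolding edual_curv[OF insertI1 ij(1,2)] tab8[rule_format, OF ij]
    using assms ij by (auto simp: yval_def sq)
qed

lemma Fcomp9: assumes "y2 > 0" "y3 = y2" shows "Fcomp y1 y2 y3 9 = F9 (1/y2)"
  unfolding Fcomp_def F9_def
proof (rule form2_cong)
  fix i j :: nat assume ij: "i \<in> {1,2,3,4,5,6,7}" "j \<in> {1,2,3,4,5,6,7}" "i < j"
  show "edual 9 (curv (Xb y1 y2 y3 i) (Xb y1 y2 y3 j)) = (if (i=2\<and>j=4) \<or> (i=5\<and>j=7) then 1/y2 else 0)"
    unfolding edual_curv[OF insertI2[OF insertI1] ij(1,2)] tab9[rule_format, OF ij]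
    using assms ij by (auto simp: yval_def sq)
qed

lemma Fcomp10: assumes "y2 > 0" "y3 = y2" shows "Fcomp y1 y2 y3 10 = F10 (-1/y2)"
  unfolding Fcomp_def F10_def
proof (rule form2_cong)
  fix i j :: nat assume ij: "i \<in> {1,2,3,4,5,6,7}" "j \<in> {1,2,3,4,5,6,7}" "i < j"
  show "edual 10 (curv (Xb y1 y2 y3 i) (Xb y1 y2 y3 j)) = (if (i=3\<and>j=4) \<or> (i=6\<and>j=7) then -1/y2 else 0)"
    unfolding edual_curv[OF insertI2[OF insertI2[OF insertI1]] ij(1,2)] tab10[rule_format, OF ij]
    using assms ij by (auto simp: yval_def sq)
qed

lemma sqrt_y1: assumes "y2 > 0" "y1 = 4 * y2 ^ 2" shows "sqrt y1 = 2 * (y2::real)"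
proof -
  have e: "y1 = (2*y2)^2" using assms(2) by (simp add: power_mult_distrib)
  show ?thesis unfolding e real_sqrt_abs using assms(1) by simp
qed

lemma omega_Om: assumes "y2 > 0" "y3 = y2" "y1 = 4 * y2 ^ 2" shows "omega y1 y2 y3 = Om"
  unfolding omega_def Om_def
proof (rule form2_cong)
  fix i j :: nat assume ij: "i \<in> {1,2,3,4,5,6,7}" "j \<in> {1,2,3,4,5,6,7}" "i < j"
  have "- (1/2) * eta_fun y1 (brk (Xb y1 y2 y3 i) (Xb y1 y2 y3 j)) =
     - (1/2) * sqrt y1 * ((1 / sqrt (yval y1 y2 y3 i)) * (1 / sqrt (yval y1 y2 y3 j))) * edual 1 (brk (ebasis i) (ebasis j))"
    unfolding eta_fun_def Xb_def brk_mscale edual_def Qform_mscale by simp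
  also have "\<dots> = (if (i=2\<and>j=5) \<or> (i=3\<and>j=6) \<or> (i=4\<and>j=7) then 1 else 0)"
    unfolding tab1[rule_format, OF ij] sqrt_y1[OF assms(1,3)]
    using assms ij by (auto simp: yval_def sq)
  finally show "- (1/2) * eta_fun y1 (brk (Xb y1 y2 y3 i) (Xb y1 y2 y3 j)) =
     (if (i=2\<and>j=5) \<or> (i=3\<and>j=6) \<or> (i=4\<and>j=7) then 1 else 0)" .
qed

theorem corollary4p7:
  fixes y1 y2 y3 :: real
  assumes "y2 > 0" and "y3 = y2" and "y1 = 4 * y2 ^ 2"
  shows "\<forall>c\<in>{8, 9, 10::nat}.
           hodge (wedge (wedge (Fcomp y1 y2 y3 c) eta) (omega y1 y2 y3)) = Fcomp y1 y2 y3 c"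
  using Fcomp8[OF assms(1,2)] Fcomp9[OF assms(1,2)] Fcomp10[OF assms(1,2)] omega_Om[OF assms] main8 main9 main10
  by simp

end
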